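(* Let $E\in M_n(\mathbb{FT})$ be idempotent. Then the column space $C(E)$ is min-plus convex if and only if there exists an idempotent $F\in M_n(\mathbb{FT})$ with $F_{i,i}=0$ for all $i$ and $C(F)=C(E)$.
   Context: $\mathbb{FT}$ is $\mathbb{R}$ with $a\oplus b=\max(a,b)$, $a\otimes b=a+b$; $M_n(\mathbb{FT})$ is the semigroup of real $n\times n$ matrices under $(A\otimes B)_{i,j}=\max_k(A_{i,k}+B_{k,j})$. $C(A)\subseteq\mathbb{R}^n$ is the set of all finite componentwise maxima of columns of $A$ each shifted by a real constant (added to all coordinates). A subset $X\subseteq\mathbb{R}^n$ is min-plus convex if it is closed under componentwise minimum and under adding a real constant to all coordinates. *)

theory Defs
  imports Complex_Main
begin

text \<open>Tropical (max-plus) n x n matrices: index type 'n (finite, |'n| = n),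
  a matrix is a function 'n => 'n => real, a vector in R^n is 'n => real.\<close>

definition trop_mult :: "('n::finite \<Rightarrow> 'n \<Rightarrow> real) \<Rightarrow> ('n \<Rightarrow> 'n \<Rightarrow> real) \<Rightarrow> ('n \<Rightarrow> 'n \<Rightarrow> real)" where
  "trop_mult A B = (\<lambda>i j. Max (range (\<lambda>k. A i k + B k j)))"

definition trop_idempotent :: "('n::finite \<Rightarrow> 'n \<Rightarrow> real) \<Rightarrow> bool" where
  "trop_idempotent E \<longleftrightarrow> trop_mult E E = E"

definition col_space :: "('n::finite \<Rightarrow> 'n \<Rightarrow> real) \<Rightarrow> ('n \<Rightarrow> real) set" where
  "col_space A = {x. \<exists>S c. finite S \<and> S \<noteq> {} \<and>
       (\<forall>i. x i = Max ((\<lambda>j. c j + A i j) ` S))}"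

definition min_plus_convex :: "('n \<Rightarrow> real) set \<Rightarrow> bool" where
  "min_plus_convex X \<longleftrightarrow>
     (\<forall>x\<in>X. \<forall>y\<in>X. (\<lambda>i. min (x i) (y i)) \<in> X) \<and>
     (\<forall>x\<in>X. \<forall>t::real. (\<lambda>i. x i + t) \<in> X)"

end

theory Submission
  imports Defs
begin

lemma max_obt:
  assumes "finite S" "S \<noteq> {}"
  shows "\<exists>j\<in>S. Max (f ` S) = f j"
proof -
  have "Max (f ` S) \<in> f ` S" using assms by (intro Max_in) auto
  thus ?thesis by auto
qed

lemma max_obt_UNIV:
  fixes f :: "'n::finite \<Rightarrow> real"
  shows "\<exists>j. Max (range f) = f j"
  using max_obt[of "UNIV::'n set" f] by auto

lemma fixed_comb:
  fixes E F :: "'n::finite \<Rightarrow> 'n \<Rightarrow> real"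
  assumes fx: "\<And>i j. j \<in> S \<Longrightarrow> F i j = Max (range (\<lambda>k. E i k + F k j))"
    and S: "finite S" "S \<noteq> {}"
    and x: "\<And>i. x i = Max ((\<lambda>j. c j + F i j) ` S)"
  shows "x i = Max (range (\<lambda>k. E i k + x k))"
proof (rule antisym)
  obtain j where j: "j \<in> S" "x i = c j + F i j"
    using max_obt[OF S, of "\<lambda>j. c j + F i j"] x[of i] by auto
  obtain k where k: "F i j = E i k + F k j"
    using max_obt_UNIV[of "\<lambda>k. E i k + F k j"] fx[OF j(1), of i] by auto
  have "c j + F k j \<le> x k" using x[of k] S j(1) by (auto simp: Max_ge_iff)
  hence "x i \<le> E i k + x k" using j k by simp
  also have "\<dots> \<le> Max (range (\<lambda>k. E i k + x k))" by (rule Max_ge) auto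
  finally show "x i \<le> Max (range (\<lambda>k. E i k + x k))" .
next
  show "Max (range (\<lambda>k. E i k + x k)) \<le> x i"
  proof (subst Max_le_iff, auto)
    fix k
    obtain j where j: "j \<in> S" "x k = c j + F k j"
      using max_obt[OF S, of "\<lambda>j. c j + F k j"] x[of k] by auto
    have "E i k + F k j \<le> Max (range (\<lambda>k. E i k + F k j))" by (rule Max_ge) auto
    hence "E i k + F k j \<le> F i j" using fx[OF j(1), of i] by simp
    moreover have "c j + F i j \<le> x i" using x[of i] S j(1) by (auto simp: Max_ge_iff)
    ultimately show "E i k + x k \<le> x i" using j by simp
  qed
qed

lemma idem_fix:
  fixes E :: "'n::finite \<Rightarrow> 'n \<Rightarrow> real"
  assumes "trop_idempotent E" "x \<in> col_space E"
  shows "x i = Max (range (\<lambda>k. E i k + x k))"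
proof -
  from assms(2) obtain S c where S: "finite S" "S \<noteq> {}" "\<And>i. x i = Max ((\<lambda>j. c j + E i j) ` S)"
    unfolding col_space_def by auto
  have fx: "\<And>i j. E i j = Max (range (\<lambda>k. E i k + E k j))"
  proof -
    fix i j
    have "trop_mult E E i j = E i j" using assms(1) unfolding trop_idempotent_def by simp
    thus "E i j = Max (range (\<lambda>k. E i k + E k j))" unfolding trop_mult_def by simp
  qed
  show ?thesis by (rule fixed_comb[OF fx S])
qed

lemma fix_col:
  fixes A :: "'n::finite \<Rightarrow> 'n \<Rightarrow> real"
  assumes "\<And>i. x i = Max (range (\<lambda>k. A i k + x k))"
  shows "x \<in> col_space A"
  unfolding col_space_def
proof (intro CollectI exI conjI allI)
  show "finite (UNIV::'n set)" by simp
  show "(UNIV::'n set) \<noteq> {}" by simp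
  fix i show "x i = Max ((\<lambda>j. x j + A i j) ` UNIV)" using assms[of i] by (simp add: add.commute)
qed

lemma zero_diag_char:
  fixes F :: "'n::finite \<Rightarrow> 'n \<Rightarrow> real"
  assumes "\<forall>i. F i i = 0" "\<And>i k. F i k + x k \<le> x i"
  shows "x i = Max (range (\<lambda>k. F i k + x k))"
proof (rule antisym)
  have "F i i + x i \<le> Max (range (\<lambda>k. F i k + x k))" by (rule Max_ge) auto
  thus "x i \<le> Max (range (\<lambda>k. F i k + x k))" using assms(1) by simp
  show "Max (range (\<lambda>k. F i k + x k)) \<le> x i" using assms(2) by (subst Max_le_iff) auto
qed

lemma fix_ineq:
  fixes F :: "'n::finite \<Rightarrow> 'n \<Rightarrow> real"
  assumes "\<And>i. x i = Max (range (\<lambda>k. F i k + x k))"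
  shows "F i k + x k \<le> x i"
proof -
  have "F i k + x k \<le> Max (range (\<lambda>k. F i k + x k))" by (rule Max_ge) auto
  thus ?thesis using assms[of i] by simp
qed

lemma min_closed:
  assumes "min_plus_convex X" "finite S" "S \<noteq> {}" "\<And>j. j \<in> S \<Longrightarrow> g j \<in> X"
  shows "(\<lambda>i. Min ((\<lambda>j. g j i) ` S)) \<in> X"
  using assms(2,3,4)
proof (induction S rule: finite_ne_induct)
  case (singleton x) thus ?case by simp
next
  case (insert a A)
  have "(\<lambda>i. Min ((\<lambda>j. g j i) ` insert a A)) = (\<lambda>i. min (g a i) (Min ((\<lambda>j. g j i) ` A)))"
    using insert by (simp add: Min_insert)
  moreover have "(\<lambda>i. min (g a i) (Min ((\<lambda>j. g j i) ` A))) \<in> X"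
    using assms(1) insert unfolding min_plus_convex_def by auto
  ultimately show ?case by simp
qed

theorem theorem6p1:
  fixes E :: "'n::finite \<Rightarrow> 'n \<Rightarrow> real"
  assumes "trop_idempotent E"
  shows "min_plus_convex (col_space E) \<longleftrightarrow>
         (\<exists>F :: 'n \<Rightarrow> 'n \<Rightarrow> real. trop_idempotent F \<and> (\<forall>i. F i i = 0) \<and>
              col_space F = col_space E)"
proof (rule iffI[rotated])
  assume "\<exists>F :: 'n \<Rightarrow> 'n \<Rightarrow> real. trop_idempotent F \<and> (\<forall>i. F i i = 0) \<and> col_space F = col_space E"
  then obtain F :: "'n \<Rightarrow> 'n \<Rightarrow> real" where F: "trop_idempotent F" "\<forall>i. F i i = 0" "col_space F = col_space E"
    by blast
  have char: "x \<in> col_space F \<longleftrightarrow> (\<forall>i k. F i k + x k \<le> x i)" for x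
  proof
    assume "x \<in> col_space F"
    hence fx: "\<And>i. x i = Max (range (\<lambda>k. F i k + x k))" by (rule idem_fix[OF F(1)])
    show "\<forall>i k. F i k + x k \<le> x i" using fix_ineq[OF fx] by (intro allI)
  next
    assume "\<forall>i k. F i k + x k \<le> x i"
    hence h: "\<And>i k. F i k + x k \<le> x i" by (elim allE)
    show "x \<in> col_space F" by (rule fix_col, rule zero_diag_char[where F=F, OF F(2) h])
  qed
  show "min_plus_convex (col_space E)"
    unfolding F(3)[symmetric] min_plus_convex_def Ball_def char
  proof (intro conjI allI impI)
    fix x y :: "'n \<Rightarrow> real" and i k
    assume "\<forall>i k. F i k + x k \<le> x i" "\<forall>i k. F i k + y k \<le> y i"
    hence a: "F i k + x k \<le> x i" and b: "F i k + y k \<le> y i" by blast+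
    thus "F i k + min (x k) (y k) \<le> min (x i) (y i)" by (simp add: min_def)
  next
    fix x :: "'n \<Rightarrow> real" and t i k
    assume "\<forall>i k. F i k + x k \<le> x i"
    thus "F i k + (x k + t) \<le> x i + t" by simp
  qed
next
  assume mc: "min_plus_convex (col_space E)"
  define F where "F i k = Min (range (\<lambda>j. E i j - E k j))" for i k
  have diag: "\<forall>i. F i i = 0" unfolding F_def by simp
  have ineq: "F i k + x k \<le> x i" if x: "x \<in> col_space E" for x i k
  proof -
    obtain j where j: "x k = E k j + x j"
      using max_obt_UNIV[of "\<lambda>j. E k j + x j"] idem_fix[OF assms x, of k] by auto
    have "E i j + x j \<le> x i" by (rule fix_ineq, rule idem_fix[OF assms x])
    moreover have "F i k \<le> E i j - E k j" unfolding F_def by (rule Min_le) auto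
    ultimately show ?thesis using j by simp
  qed
  have colE: "(\<lambda>i. E i j + t) \<in> col_space E" for j t
    unfolding col_space_def by (rule CollectI, rule exI[of _ "{j}"], rule exI[of _ "\<lambda>_. t"]) (auto simp: add.commute)
  have colF: "(\<lambda>i. F i k) \<in> col_space E" for k
  proof -
    have "(\<lambda>i. E i j - E k j) \<in> col_space E" for j using colE[of j "- E k j"] by simp
    thus ?thesis unfolding F_def by (intro min_closed[OF mc]) auto
  qed
  have fxF: "F i j = Max (range (\<lambda>k. E i k + F k j))" for i j
    by (rule idem_fix[OF assms colF])
  have eq: "col_space F = col_space E"
  proof
    show "col_space F \<subseteq> col_space E"
    proof
      fix x assume "x \<in> col_space F"
      then obtain S c where S: "finite S" "S \<noteq> {}" "\<And>i. x i = Max ((\<lambda>j. c j + F i j) ` S)"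
        unfolding col_space_def by auto
      show "x \<in> col_space E" by (rule fix_col, rule fixed_comb[OF fxF S])
    qed
  next
    show "col_space E \<subseteq> col_space F"
    proof
      fix x assume "x \<in> col_space E"
      hence h: "\<And>i k. F i k + x k \<le> x i" by (rule ineq)
      show "x \<in> col_space F" by (rule fix_col, rule zero_diag_char[where F=F, OF diag h])
    qed
  qed
  have idem: "trop_idempotent F"
    unfolding trop_idempotent_def trop_mult_def
  proof (intro ext antisym)
    fix i j
    show "Max (range (\<lambda>k. F i k + F k j)) \<le> F i j"
      using ineq[OF colF] by (subst Max_le_iff) auto
    show "F i j \<le> Max (range (\<lambda>k. F i k + F k j))"
    proof -
      have "F i j + F j j \<le> Max (range (\<lambda>k. F i k + F k j))" by (rule Max_ge) auto
      thus ?thesis using diag by simp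
    qed
  qed
  show "\<exists>F :: 'n \<Rightarrow> 'n \<Rightarrow> real. trop_idempotent F \<and> (\<forall>i. F i i = 0) \<and> col_space F = col_space E"
    using idem diag eq by blast
qed

end
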